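(* Let $k\ge 1$ be an integer and $p\in[0,1]$. Let $I_1,\dots,I_k$ be independent random variables with $P(I_j=1)=p$, $P(I_j=0)=1-p$. Let $P@i=\frac1i\sum_{j=1}^i I_j$ and $$AP@k=\frac1k\sum_{i=1}^k P@i\cdot I_i.$$ Then $$\operatorname{E}(AP@k)=p\left(p+(1-p)\frac1k H_k\right),$$ where $H_k=\sum_{i=1}^k\frac1i$.
   Context: This is the online evaluation model: each of the top-$k$ recommended items is relevant independently with probability $p$ ($I_j=1$ iff the item at position $j$ is relevant). The expectation is called $MAP_{WR}@k$ in the paper. *)

theory Defs
  imports "HOL-Probability.Probability"
begin

text \<open>Joint law of independent Bernoulli(p) relevance indicators I_1..I_k
  (positions outside 1..k are fixed to False).\<close>
definition relevance_pmf :: "nat \<Rightarrow> real \<Rightarrow> (nat \<Rightarrow> bool) pmf" where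
  "relevance_pmf k p = Pi_pmf {1..k} False (\<lambda>_. bernoulli_pmf p)"

definition prec_at :: "(nat \<Rightarrow> bool) \<Rightarrow> nat \<Rightarrow> real" where
  "prec_at I i = (1 / real i) * (\<Sum>j=1..i. of_bool (I j))"

definition AP_at :: "(nat \<Rightarrow> bool) \<Rightarrow> nat \<Rightarrow> real" where
  "AP_at I k = (1 / real k) * (\<Sum>i=1..k. prec_at I i * of_bool (I i))"

end

theory Submission
  imports Defs
begin

lemma fin_supp: "finite (set_pmf (relevance_pmf k p))"
proof -
  have "set_pmf (relevance_pmf k p) \<subseteq> PiE_dflt {1..k} False (\<lambda>_. UNIV)"
    unfolding relevance_pmf_def using set_Pi_pmf_subset'[of "{1..k}" False "\<lambda>_. bernoulli_pmf p"]
    by (auto simp: PiE_dflt_def)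
  moreover have "finite (PiE_dflt {1..k} False (\<lambda>_. (UNIV::bool set)))"
    by (intro finite_PiE_dflt) auto
  ultimately show ?thesis by (rule finite_subset)
qed

lemma integ: "integrable (measure_pmf (relevance_pmf k p)) (f :: _ \<Rightarrow> real)"
  by (rule integrable_measure_pmf_finite[OF fin_supp])

lemma E_pair:
  assumes "i \<in> {1..k}" "j \<in> {1..k}" "0 \<le> p" "p \<le> 1"
  shows "measure_pmf.expectation (relevance_pmf k p) (\<lambda>I. of_bool (I j) * of_bool (I i))
         = (if i = j then p else p^2)"
proof -
  have eq: "(\<lambda>I. of_bool (I j) * of_bool (I i) :: real) =
     (\<lambda>I. \<Prod>x\<in>{1..k}. (\<lambda>x v. if x \<in> {i,j} then of_bool v else 1) x (I x))"
  proof
    fix I :: "nat \<Rightarrow> bool"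
    have "(\<Prod>x\<in>{1..k}. (if x \<in> {i,j} then of_bool (I x) else 1::real))
        = (\<Prod>x\<in>{1..k} \<inter> {i,j}. of_bool (I x))"
      by (rule prod.inter_restrict[symmetric]) simp
    also have "{1..k} \<inter> {i,j} = {i,j}" using assms by auto
    also have "(\<Prod>x\<in>{i,j}. of_bool (I x)) = (of_bool (I j) * of_bool (I i) :: real)"
      by (cases "i = j") auto
    finally have hh: "(\<Prod>x\<in>{1..k}. (if x \<in> {i,j} then of_bool (I x) else 1::real))
        = of_bool (I j) * of_bool (I i)" .
    show "of_bool (I j) * of_bool (I i) =
       (\<Prod>x\<in>{1..k}. (\<lambda>x v. if x \<in> {i,j} then of_bool v else 1::real) x (I x))"
      using hh[symmetric] by (simp only: )
  qed
  have "measure_pmf.expectation (relevance_pmf k p) (\<lambda>I. of_bool (I j) * of_bool (I i))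
     = (\<Prod>x\<in>{1..k}. measure_pmf.expectation (bernoulli_pmf p)
          (\<lambda>v. if x \<in> {i,j} then of_bool v else (1::real)))"
    unfolding eq relevance_pmf_def
    by (rule expectation_prod_Pi_pmf) (auto intro: integrable_measure_pmf_finite)
  also have "\<dots> = (\<Prod>x\<in>{1..k}. if x \<in> {i,j} then p else 1)"
    using assms by (intro prod.cong) auto
  also have "\<dots> = (\<Prod>x\<in>{1..k} \<inter> {i,j}. p)"
    by (rule prod.inter_restrict[symmetric]) simp
  also have "{1..k} \<inter> {i,j} = {i,j}" using assms by auto
  finally show ?thesis by (cases "i = j") (auto simp: power2_eq_square)
qed

lemma E_prec:
  assumes "i \<in> {1..k}" "0 \<le> p" "p \<le> 1"
  shows "measure_pmf.expectation (relevance_pmf k p) (\<lambda>I. prec_at I i * of_bool (I i))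
         = p^2 + (p - p^2) / real i"
proof -
  have "measure_pmf.expectation (relevance_pmf k p) (\<lambda>I. prec_at I i * of_bool (I i))
     = (1 / real i) * (\<Sum>j=1..i. measure_pmf.expectation (relevance_pmf k p)
            (\<lambda>I. of_bool (I j) * of_bool (I i)))"
    unfolding prec_at_def sum_distrib_right mult.assoc
    by (simp only: integral_mult_right_zero Bochner_Integration.integral_sum[OF integ])
  also have "(\<Sum>j=1..i. measure_pmf.expectation (relevance_pmf k p)
            (\<lambda>I. of_bool (I j) * of_bool (I i))) = (\<Sum>j=1..i. if i = j then p else p^2)"
    using assms by (intro sum.cong refl E_pair) auto
  also have "\<dots> = (\<Sum>j\<in>{1..i} - {i}. p^2) + p"
  proof -
    have "(\<Sum>j=1..i. if i = j then p else p^2) = (if i = i then p else p^2)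
       + (\<Sum>j\<in>{1..i} - {i}. if i = j then p else p^2)"
      by (rule sum.remove) (use assms in auto)
    also have "(\<Sum>j\<in>{1..i} - {i}. if i = j then p else p^2) = (\<Sum>j\<in>{1..i} - {i}. p^2)"
      by (rule sum.cong) auto
    finally show ?thesis by simp
  qed
  also have "\<dots> = (real i - 1) * p^2 + p"
  proof -
    have cc: "card ({1..i} - {i}) = i - 1" using assms by simp
    show ?thesis using assms by (simp only: sum_constant cc) (simp add: of_nat_diff)
  qed
  finally show ?thesis using assms by (simp add: field_simps)
qed

theorem theorem3:
  fixes k :: nat and p :: real
  assumes "k \<ge> 1" and "0 \<le> p" and "p \<le> 1"
  shows "measure_pmf.expectation (relevance_pmf k p) (\<lambda>I. AP_at I k)
           = p * (p + (1 - p) * (1 / real k) * (\<Sum>i=1..k. 1 / real i))"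
proof -
  have "measure_pmf.expectation (relevance_pmf k p) (\<lambda>I. AP_at I k)
      = (1 / real k) * (\<Sum>i=1..k. measure_pmf.expectation (relevance_pmf k p)
            (\<lambda>I. prec_at I i * of_bool (I i)))"
    unfolding AP_at_def
    by (simp only: integral_mult_right_zero Bochner_Integration.integral_sum[OF integ])
  also have "(\<Sum>i=1..k. measure_pmf.expectation (relevance_pmf k p)
            (\<lambda>I. prec_at I i * of_bool (I i))) = (\<Sum>i=1..k. p^2 + (p - p^2) / real i)"
    using assms by (intro sum.cong refl E_prec) auto
  also have "\<dots> = real k * p^2 + (p - p^2) * (\<Sum>i=1..k. 1 / real i)"
    by (simp add: sum.distrib sum_distrib_left)
  finally show ?thesis using assms by (simp add: field_simps power2_eq_square)
qed

end
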